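(* For all $\Sigma\subseteq\mathsf{FOR}$ and $\varphi\in\mathsf{FOR}$: $\Sigma\vdash_{\mathcal{F}S}\varphi$ if and only if $\Sigma\vDash_{\mathsf{R}^s}\varphi$, where $\mathsf{R}^s$ is the set of all symmetric Epstein relations. In particular every theorem of $\mathcal{F}S$ is valid on every symmetric relation.
   Context: Language: propositional letters $\Phi=\{p_0,p_1,\dots\}$; connectives $\neg$, $\lor,\wedge,\to,\leftrightarrow,\vartriangle,\looparrowright$; $\mathsf{FOR}$ the set of all formulas. An Epstein model is $\langle v,\mathfrak{R}\rangle$ with $v:\Phi\to\{0,1\}$ and $\mathfrak{R}\subseteq\mathsf{FOR}^2$ (an Epstein relation); truth: letters via $v$, boolean connectives classical, $\langle v,\mathfrak{R}\rangle\vDash\varphi\vartriangle\psi$ iff both true and $\langle\varphi,\psi\rangle\in\mathfrak{R}$; $\langle v,\mathfrak{R}\rangle\vDash\varphi\looparrowright\psi$ iff $\varphi\to\psi$ true and $\langle\varphi,\psi\rangle\in\mathfrak{R}$. For a set $\mathsf{R}$ of relations, $\Sigma\vDash_{\mathsf{R}}\varphi$ iff for every $\mathfrak{R}\in\mathsf{R}$ and every valuation $v$, if $\langle v,\mathfrak{R}\rangle$ satisfies all of $\Sigma$ then it satisfies $\varphi$. $\mathcal{F}$ is the least set containing all classical tautologies of the language (substitution instances of propositional tautologies) and the axioms $(p\looparrowright q)\to(p\to q)$ and $(p\vartriangle q)\leftrightarrow((p\looparrowright q)\wedge(p\wedge q))$, closed under uniform substitution and modus ponens. $\mathcal{F}S$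 is the least set containing $\mathcal{F}$ and the axiom $(s)\ (p\looparrowright q)\to((q\looparrowright p)\lor\neg(q\to p))$ ($p,q$ distinct letters), closed under uniform substitution and modus ponens. $\Sigma\vdash_{\mathcal{F}S}\varphi$ iff there is a finite sequence ending in $\varphi$ each member of which is in $\mathcal{F}S\cup\Sigma$ or follows from two earlier members by modus ponens. *)

theory Defs
  imports Main
begin

text \<open>Formulas over letters p_0, p_1, ... (indexed by nat).
  Tri = the content conjunction, Loop = the relatedness implication.\<close>
datatype form =
    Var nat
  | Neg form
  | Disj form form
  | Conj form form
  | Imp form form
  | Iff form form
  | Tri form form
  | Loop form form

fun sat :: "(nat \<Rightarrow> bool) \<Rightarrow> (form \<times> form) set \<Rightarrow> form \<Rightarrow> bool" where
  "sat v R (Var n) = v n"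
| "sat v R (Neg a) = (\<not> sat v R a)"
| "sat v R (Disj a b) = (sat v R a \<or> sat v R b)"
| "sat v R (Conj a b) = (sat v R a \<and> sat v R b)"
| "sat v R (Imp a b) = (sat v R a \<longrightarrow> sat v R b)"
| "sat v R (Iff a b) = (sat v R a \<longleftrightarrow> sat v R b)"
| "sat v R (Tri a b) = (sat v R a \<and> sat v R b \<and> (a, b) \<in> R)"
| "sat v R (Loop a b) = ((sat v R a \<longrightarrow> sat v R b) \<and> (a, b) \<in> R)"

definition conseq :: "(form \<times> form) set set \<Rightarrow> form set \<Rightarrow> form \<Rightarrow> bool" where
  "conseq Rs \<Sigma> \<phi> \<longleftrightarrow>
     (\<forall>R\<in>Rs. \<forall>v. (\<forall>\<sigma>\<in>\<Sigma>. sat v R \<sigma>) \<longrightarrow> sat v R \<phi>)"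

definition Rsym :: "(form \<times> form) set set" where
  "Rsym = {R. sym R}"

fun subst :: "(nat \<Rightarrow> form) \<Rightarrow> form \<Rightarrow> form" where
  "subst s (Var n) = s n"
| "subst s (Neg a) = Neg (subst s a)"
| "subst s (Disj a b) = Disj (subst s a) (subst s b)"
| "subst s (Conj a b) = Conj (subst s a) (subst s b)"
| "subst s (Imp a b) = Imp (subst s a) (subst s b)"
| "subst s (Iff a b) = Iff (subst s a) (subst s b)"
| "subst s (Tri a b) = Tri (subst s a) (subst s b)"
| "subst s (Loop a b) = Loop (subst s a) (subst s b)"

fun boolean :: "form \<Rightarrow> bool" where
  "boolean (Var n) = True"
| "boolean (Neg a) = boolean a"
| "boolean (Disj a b) = (boolean a \<and> boolean b)"
| "boolean (Conj a b) = (boolean a \<and> boolean b)"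
| "boolean (Imp a b) = (boolean a \<and> boolean b)"
| "boolean (Iff a b) = (boolean a \<and> boolean b)"
| "boolean (Tri a b) = False"
| "boolean (Loop a b) = False"

definition classical_taut :: "form \<Rightarrow> bool" where
  "classical_taut \<phi> \<longleftrightarrow>
     (\<exists>\<tau> s. boolean \<tau> \<and> (\<forall>v. sat v {} \<tau>) \<and> \<phi> = subst s \<tau>)"

inductive F :: "form \<Rightarrow> bool" where
  F_taut: "classical_taut \<phi> \<Longrightarrow> F \<phi>"
| F_ax1: "F (Imp (Loop (Var 0) (Var 1)) (Imp (Var 0) (Var 1)))"
| F_ax2: "F (Iff (Tri (Var 0) (Var 1)) (Conj (Loop (Var 0) (Var 1)) (Conj (Var 0) (Var 1))))"
| F_subst: "F \<phi> \<Longrightarrow> F (subst s \<phi>)"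
| F_mp: "F \<phi> \<Longrightarrow> F (Imp \<phi> \<psi>) \<Longrightarrow> F \<psi>"

inductive FS :: "form \<Rightarrow> bool" where
  FS_F: "F \<phi> \<Longrightarrow> FS \<phi>"
| FS_s: "FS (Imp (Loop (Var 0) (Var 1)) (Disj (Loop (Var 1) (Var 0)) (Neg (Imp (Var 1) (Var 0)))))"
| FS_subst: "FS \<phi> \<Longrightarrow> FS (subst s \<phi>)"
| FS_mp: "FS \<phi> \<Longrightarrow> FS (Imp \<phi> \<psi>) \<Longrightarrow> FS \<psi>"

definition derivable_FS :: "form set \<Rightarrow> form \<Rightarrow> bool" where
  "derivable_FS \<Sigma> \<phi> \<longleftrightarrow>
     (\<exists>ds. ds \<noteq> [] \<and> last ds = \<phi> \<and>
        (\<forall>i<length ds. FS (ds ! i) \<or> ds ! i \<in> \<Sigma> \<or>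
            (\<exists>j<i. \<exists>k<i. ds ! k = Imp (ds ! j) (ds ! i))))"

end

theory Submission
  imports Defs
begin

section \<open>Soundness\<close>

lemma sat_subst': "sat v R (subst s \<tau>) = sat (\<lambda>n. sat v R (s n)) R' \<tau>" if "boolean \<tau>"
  using that by (induction \<tau>) auto

lemma sat_subst_gen: "sat v R (subst s \<tau>) = sat (\<lambda>n. sat v R (s n)) (map_prod (subst s) (subst s) -` R) \<tau>"
  by (induction \<tau>) auto

lemma sym_preimage: "sym R \<Longrightarrow> sym (map_prod f f -` R)"
  unfolding sym_def by auto

lemma F_sound: "F \<phi> \<Longrightarrow> sym R \<Longrightarrow> sat v R \<phi>"
proof (induction arbitrary: R v rule: F.induct)
  case (F_taut \<phi>)
  then obtain \<tau> s where "boolean \<tau>" "\<forall>v. sat v {} \<tau>" "\<phi> = subst s \<tau>"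
    unfolding classical_taut_def by blast
  then show ?case using sat_subst'[of \<tau> v R s "{}"] by simp
next
  case (F_subst \<phi> s)
  then show ?case using sat_subst_gen[of v R s \<phi>] F_subst.IH[OF sym_preimage[OF F_subst.prems]] by simp
qed auto

lemma FS_sound: "FS \<phi> \<Longrightarrow> sym R \<Longrightarrow> sat v R \<phi>"
proof (induction arbitrary: R v rule: FS.induct)
  case (FS_F \<phi>)
  then show ?case using F_sound by blast
next
  case FS_s
  then show ?case unfolding sym_def by auto
next
  case (FS_subst \<phi> s)
  then show ?case using sat_subst_gen[of v R s \<phi>] FS_subst.IH[OF sym_preimage[OF FS_subst.prems]] by simp
qed auto

inductive ded :: "form set \<Rightarrow> form \<Rightarrow> bool" for \<Gamma> where
  ded_FS: "FS \<phi> \<Longrightarrow> ded \<Gamma> \<phi>"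
| ded_hyp: "\<phi> \<in> \<Gamma> \<Longrightarrow> ded \<Gamma> \<phi>"
| ded_mp: "ded \<Gamma> \<phi> \<Longrightarrow> ded \<Gamma> (Imp \<phi> \<psi>) \<Longrightarrow> ded \<Gamma> \<psi>"

definition good :: "form set \<Rightarrow> form list \<Rightarrow> bool" where
  "good \<Sigma> ds \<longleftrightarrow> (\<forall>i<length ds. FS (ds ! i) \<or> ds ! i \<in> \<Sigma> \<or>
            (\<exists>j<i. \<exists>k<i. ds ! k = Imp (ds ! j) (ds ! i)))"

lemma good_ded: "good \<Sigma> ds \<Longrightarrow> i < length ds \<Longrightarrow> ded \<Sigma> (ds ! i)"
proof (induction i rule: less_induct)
  case (less i)
  then have "FS (ds ! i) \<or> ds ! i \<in> \<Sigma> \<or> (\<exists>j<i. \<exists>k<i. ds ! k = Imp (ds ! j) (ds ! i))"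
    unfolding good_def by blast
  then show ?case
  proof (elim disjE exE conjE)
    fix j k assume "j < i" "k < i" "ds ! k = Imp (ds ! j) (ds ! i)"
    then show ?thesis using less ded_mp by (metis less_trans)
  qed (auto intro: ded.intros)
qed

lemma good_append: "good \<Sigma> xs \<Longrightarrow> good \<Sigma> ys \<Longrightarrow> good \<Sigma> (xs @ ys)"
  unfolding good_def
proof (intro allI impI)
  fix i
  assume gx: "\<forall>i<length xs. FS (xs ! i) \<or> xs ! i \<in> \<Sigma> \<or> (\<exists>j<i. \<exists>k<i. xs ! k = Imp (xs ! j) (xs ! i))"
    and gy: "\<forall>i<length ys. FS (ys ! i) \<or> ys ! i \<in> \<Sigma> \<or> (\<exists>j<i. \<exists>k<i. ys ! k = Imp (ys ! j) (ys ! i))"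
    and i: "i < length (xs @ ys)"
  show "FS ((xs @ ys) ! i) \<or> (xs @ ys) ! i \<in> \<Sigma> \<or>
         (\<exists>j<i. \<exists>k<i. (xs @ ys) ! k = Imp ((xs @ ys) ! j) ((xs @ ys) ! i))"
  proof (cases "i < length xs")
    case True
    have e: "\<And>m. m < length xs \<Longrightarrow> (xs @ ys) ! m = xs ! m" by (simp add: nth_append_left)
    from gx[rule_format, OF True] show ?thesis
    proof (elim disjE exE conjE)
      fix j k assume "j < i" "k < i" "xs ! k = Imp (xs ! j) (xs ! i)"
      then show ?thesis using True e[of i] e[of j] e[of k]
        by (intro disjI2 exI[of _ j] conjI exI[of _ k]) simp_all
    qed (use True e[of i] in simp_all)
  next
    case False
    define i' where "i' = i - length xs"
    have i': "i' < length ys" "i = length xs + i'" using i False by (auto simp: i'_def)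
    have e: "\<And>m. (xs @ ys) ! (length xs + m) = ys ! m" by (simp add: nth_append_right)
    from gy[rule_format, OF i'(1)] show ?thesis
    proof (elim disjE exE conjE)
      fix j k assume "j < i'" "k < i'" "ys ! k = Imp (ys ! j) (ys ! i')"
      then show ?thesis using i' e[of j] e[of k] e[of i']
        by (intro disjI2 exI[of _ "length xs + j"] conjI exI[of _ "length xs + k"]) simp_all
    qed (use i' e[of i'] in simp_all)
  qed
qed

lemma ded_good: "ded \<Sigma> \<phi> \<Longrightarrow> \<exists>ds. ds \<noteq> [] \<and> last ds = \<phi> \<and> good \<Sigma> ds"
proof (induction rule: ded.induct)
  case (ded_FS \<phi>)
  then show ?case by (intro exI[of _ "[\<phi>]"]) (auto simp: good_def)
next
  case (ded_hyp \<phi>)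
  then show ?case by (intro exI[of _ "[\<phi>]"]) (auto simp: good_def)
next
  case (ded_mp \<phi> \<psi>)
  then obtain xs ys where x: "xs \<noteq> []" "last xs = \<phi>" "good \<Sigma> xs"
    and y: "ys \<noteq> []" "last ys = Imp \<phi> \<psi>" "good \<Sigma> ys" by blast
  have g: "good \<Sigma> [\<psi>]" if "FS \<psi> \<or> \<psi> \<in> \<Sigma>" for \<psi> using that by (auto simp: good_def)
  let ?ds = "xs @ ys @ [\<psi>]"
  have "good \<Sigma> ?ds"
    unfolding good_def
  proof (intro allI impI)
    fix i assume i: "i < length ?ds"
    show "FS (?ds ! i) \<or> ?ds ! i \<in> \<Sigma> \<or> (\<exists>j<i. \<exists>k<i. ?ds ! k = Imp (?ds ! j) (?ds ! i))"
    proof (cases "i < length (xs @ ys)")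
      case True
      have gxy: "good \<Sigma> (xs @ ys)" using x y good_append by blast
      have e: "\<And>m. m < length (xs @ ys) \<Longrightarrow> ?ds ! m = (xs @ ys) ! m"
        by (metis append.assoc nth_append_left)
      have "FS ((xs @ ys) ! i) \<or> (xs @ ys) ! i \<in> \<Sigma> \<or>
            (\<exists>j<i. \<exists>k<i. (xs @ ys) ! k = Imp ((xs @ ys) ! j) ((xs @ ys) ! i))"
        using gxy True unfolding good_def by blast
      then show ?thesis
      proof (elim disjE exE conjE)
        fix j k assume "j < i" "k < i" "(xs @ ys) ! k = Imp ((xs @ ys) ! j) ((xs @ ys) ! i)"
        then show ?thesis using True e[of i] e[of j] e[of k]
          by (intro disjI2 exI[of _ j] conjI exI[of _ k]) simp_all
      qed (use True e[of i] in simp_all)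
    next
      case False
      then have ii: "i = length xs + length ys" using i by simp
      have lx: "length xs > 0" "length ys > 0" using x y by auto
      have "?ds ! (length xs - 1) = \<phi>" using x lx by (simp add: nth_append_left last_conv_nth)
      moreover have "?ds ! (length xs + length ys - 1) = Imp \<phi> \<psi>"
      proof -
        have "?ds ! (length xs + (length ys - 1)) = (ys @ [\<psi>]) ! (length ys - 1)"
          by (simp only: nth_append_length_plus)
        also have "\<dots> = ys ! (length ys - 1)" using lx by (simp add: nth_append_left)
        finally show ?thesis using y lx by (simp add: last_conv_nth)
      qed
      moreover have "?ds ! i = \<psi>" using ii
        by (metis append.assoc length_append nth_append_length)
      moreover have "length xs - 1 < i" "length xs + length ys - 1 < i" using lx ii by linarith+
      ultimately show ?thesis by metis
    qed
  qed
  then show ?case by (intro exI[of _ ?ds]) auto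
qed

lemma derivable_iff_ded: "derivable_FS \<Sigma> \<phi> \<longleftrightarrow> ded \<Sigma> \<phi>"
proof
  assume "derivable_FS \<Sigma> \<phi>"
  then obtain ds where "ds \<noteq> []" "last ds = \<phi>" "good \<Sigma> ds"
    unfolding derivable_FS_def good_def by blast
  then show "ded \<Sigma> \<phi>" using good_ded[of \<Sigma> ds "length ds - 1"] by (simp add: last_conv_nth)
next
  assume "ded \<Sigma> \<phi>"
  then show "derivable_FS \<Sigma> \<phi>" using ded_good unfolding derivable_FS_def good_def by blast
qed

lemma ded_sound: "ded \<Sigma> \<phi> \<Longrightarrow> sym R \<Longrightarrow> \<forall>\<sigma>\<in>\<Sigma>. sat v R \<sigma> \<Longrightarrow> sat v R \<phi>"
  by (induction rule: ded.induct) (auto intro: FS_sound)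

definition sb :: "form \<Rightarrow> form \<Rightarrow> form \<Rightarrow> nat \<Rightarrow> form" where
  "sb a b c n = (if n = 0 then a else if n = 1 then b else c)"

lemma taut3: "boolean \<tau> \<Longrightarrow> (\<forall>v. sat v {} \<tau>) \<Longrightarrow> FS (subst (sb a b c) \<tau>)"
  by (rule FS_F, rule F_taut) (auto simp: classical_taut_def)

abbreviation "P0 \<equiv> Var 0"
abbreviation "P1 \<equiv> Var 1"
abbreviation "P2 \<equiv> Var 2"

lemma t_K: "FS (Imp a (Imp b a))"
  using taut3[of "Imp P0 (Imp P1 P0)" a b a] by (simp add: sb_def)
lemma t_I: "FS (Imp a a)"
  using taut3[of "Imp P0 P0" a a a] by (simp add: sb_def)
lemma t_S: "FS (Imp (Imp a (Imp b c)) (Imp (Imp a b) (Imp a c)))"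
  using taut3[of "Imp (Imp P0 (Imp P1 P2)) (Imp (Imp P0 P1) (Imp P0 P2))" a b c] by (simp add: sb_def)
lemma t_cases: "FS (Imp (Imp a b) (Imp (Imp (Neg a) b) b))"
  using taut3[of "Imp (Imp P0 P1) (Imp (Imp (Neg P0) P1) P1)" a b a] by (simp add: sb_def) blast
lemma t_contr: "FS (Imp a (Imp (Neg a) b))"
  using taut3[of "Imp P0 (Imp (Neg P0) P1)" a b a] by (simp add: sb_def)
lemma t_disj1: "FS (Imp (Disj a b) (Imp (Neg a) b))"
  using taut3[of "Imp (Disj P0 P1) (Imp (Neg P0) P1)" a b a] by (simp add: sb_def)
lemma t_disj2: "FS (Imp a (Disj a b))"
  using taut3[of "Imp P0 (Disj P0 P1)" a b a] by (simp add: sb_def)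
lemma t_disj3: "FS (Imp b (Disj a b))"
  using taut3[of "Imp P1 (Disj P0 P1)" a b a] by (simp add: sb_def)
lemma t_conj1: "FS (Imp (Conj a b) a)"
  using taut3[of "Imp (Conj P0 P1) P0" a b a] by (simp add: sb_def)
lemma t_conj2: "FS (Imp (Conj a b) b)"
  using taut3[of "Imp (Conj P0 P1) P1" a b a] by (simp add: sb_def)
lemma t_conj3: "FS (Imp a (Imp b (Conj a b)))"
  using taut3[of "Imp P0 (Imp P1 (Conj P0 P1))" a b a] by (simp add: sb_def)
lemma t_imp1: "FS (Imp (Neg a) (Imp a b))"
  using taut3[of "Imp (Neg P0) (Imp P0 P1)" a b a] by (simp add: sb_def)
lemma t_iff1: "FS (Imp (Iff a b) (Imp a b))"
  using taut3[of "Imp (Iff P0 P1) (Imp P0 P1)" a b a] by (simp add: sb_def)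
lemma t_iff2: "FS (Imp (Iff a b) (Imp b a))"
  using taut3[of "Imp (Iff P0 P1) (Imp P1 P0)" a b a] by (simp add: sb_def)
lemma t_iff3: "FS (Imp a (Imp b (Iff a b)))"
  using taut3[of "Imp P0 (Imp P1 (Iff P0 P1))" a b a] by (simp add: sb_def)
lemma t_iff4: "FS (Imp (Neg a) (Imp (Neg b) (Iff a b)))"
  using taut3[of "Imp (Neg P0) (Imp (Neg P1) (Iff P0 P1))" a b a] by (simp add: sb_def)

definition sb2 :: "form \<Rightarrow> form \<Rightarrow> nat \<Rightarrow> form" where
  "sb2 a b n = (if n = 0 then a else b)"

lemma ax1: "FS (Imp (Loop a b) (Imp a b))"
  using FS_F[OF F_subst[OF F_ax1, of "sb2 a b"]] by (simp add: sb2_def)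
lemma ax2: "FS (Iff (Tri a b) (Conj (Loop a b) (Conj a b)))"
  using FS_F[OF F_subst[OF F_ax2, of "sb2 a b"]] by (simp add: sb2_def)
lemma axs: "FS (Imp (Loop a b) (Disj (Loop b a) (Neg (Imp b a))))"
  using FS_subst[OF FS_s, of "sb2 a b"] by (simp add: sb2_def)

section \<open>Deduction theorem and compactness\<close>

lemma deduction: "ded (insert \<psi> \<Gamma>) \<phi> \<Longrightarrow> ded \<Gamma> (Imp \<psi> \<phi>)"
proof (induction rule: ded.induct)
  case (ded_FS \<phi>)
  then show ?case by (meson ded.intros t_K)
next
  case (ded_hyp \<phi>)
  then show ?case by (metis ded.intros insertE t_I t_K)
next
  case (ded_mp \<phi> \<chi>)
  then show ?case by (meson ded.intros t_S)
qed

lemma ded_mono: "ded \<Gamma> \<phi> \<Longrightarrow> \<Gamma> \<subseteq> \<Delta> \<Longrightarrow> ded \<Delta> \<phi>"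
  by (induction rule: ded.induct) (auto intro: ded.intros)

lemma ded_finite: "ded \<Gamma> \<phi> \<Longrightarrow> \<exists>G. finite G \<and> G \<subseteq> \<Gamma> \<and> ded G \<phi>"
proof (induction rule: ded.induct)
  case (ded_FS \<phi>)
  then show ?case by (auto intro: ded.intros)
next
  case (ded_hyp \<phi>)
  then show ?case by (intro exI[of _ "{\<phi>}"]) (auto intro: ded.intros)
next
  case (ded_mp \<phi> \<psi>)
  then obtain G1 G2 where "finite G1" "G1 \<subseteq> \<Gamma>" "ded G1 \<phi>" "finite G2" "G2 \<subseteq> \<Gamma>" "ded G2 (Imp \<phi> \<psi>)"
    by blast
  then show ?case
    by (intro exI[of _ "G1 \<union> G2"]) (meson ded.ded_mp ded_mono finite_UnI le_sup_iff sup_ge1 sup_ge2)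
qed

section \<open>Completeness\<close>

lemma lindenbaum:
  assumes "\<not> ded \<Sigma> \<phi>"
  shows "\<exists>M. \<Sigma> \<subseteq> M \<and> \<not> ded M \<phi> \<and> (\<forall>N. M \<subseteq> N \<longrightarrow> \<not> ded N \<phi> \<longrightarrow> N = M)"
proof -
  let ?A = "{N. \<not> ded (\<Sigma> \<union> N) \<phi>}"
  have "\<forall>C\<in>chains ?A. \<Union>C \<in> ?A"
  proof
    fix C assume C: "C \<in> chains ?A"
    show "\<Union>C \<in> ?A"
    proof (cases "C = {}")
      case True then show ?thesis using assms by simp
    next
      case False
      show ?thesis
      proof (rule ccontr)
        assume "\<Union>C \<notin> ?A"
        then obtain G where G: "finite G" "G \<subseteq> \<Sigma> \<union> \<Union>C" "ded G \<phi>" using ded_finite by blast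
        have "finite (G - \<Sigma>)" "G - \<Sigma> \<subseteq> \<Union>C" using G by auto
        moreover have "subset.chain ?A C" using C by (simp add: chains_alt_def)
        ultimately obtain B where "B \<in> C" "G - \<Sigma> \<subseteq> B"
          using finite_subset_Union_chain[of "G - \<Sigma>" C ?A] False by blast
        moreover have "B \<in> ?A" using C \<open>B \<in> C\<close> by (auto simp: chains_def)
        moreover have "G \<subseteq> \<Sigma> \<union> B" using \<open>G - \<Sigma> \<subseteq> B\<close> by blast
        ultimately show False using G ded_mono by blast
      qed
    qed
  qed
  then obtain N where N: "N \<in> ?A" "\<forall>X\<in>?A. N \<subseteq> X \<longrightarrow> X = N" using Zorn_Lemma[of ?A] by blast
  show ?thesis
  proof (intro exI[of _ "\<Sigma> \<union> N"] conjI allI impI)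
    show "\<Sigma> \<subseteq> \<Sigma> \<union> N" by blast
    show "\<not> ded (\<Sigma> \<union> N) \<phi>" using N by simp
  next
    fix X assume "\<Sigma> \<union> N \<subseteq> X" "\<not> ded X \<phi>"
    then have "X \<in> ?A" "N \<subseteq> X" by (auto simp: Un_absorb1)
    then have "X = N" using N by blast
    then show "X = \<Sigma> \<union> N" using \<open>\<Sigma> \<union> N \<subseteq> X\<close> by blast
  qed
qed

locale maxset =
  fixes M \<phi>
  assumes nd: "\<not> ded M \<phi>"
    and mx: "\<And>N. M \<subseteq> N \<Longrightarrow> \<not> ded N \<phi> \<Longrightarrow> N = M"
begin

lemma closed: "ded M \<chi> \<Longrightarrow> \<chi> \<in> M"
proof (rule ccontr)
  assume d: "ded M \<chi>" and n: "\<chi> \<notin> M"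
  have "\<not> ded (insert \<chi> M) \<phi>"
  proof
    assume "ded (insert \<chi> M) \<phi>"
    then have "ded M (Imp \<chi> \<phi>)" by (rule deduction)
    then have "ded M \<phi>" by (rule ded_mp[OF d])
    then show False using nd by simp
  qed
  then have "insert \<chi> M = M" using mx[of "insert \<chi> M"] by blast
  then show False using n by blast
qed

lemma fs_in: "FS \<chi> \<Longrightarrow> \<chi> \<in> M" by (rule closed, rule ded_FS)

lemma mp1: "FS (Imp a b) \<Longrightarrow> a \<in> M \<Longrightarrow> b \<in> M"
  by (rule closed, rule ded_mp[OF ded_hyp ded_FS])
lemma mpM: "Imp a b \<in> M \<Longrightarrow> a \<in> M \<Longrightarrow> b \<in> M"
  by (rule closed, rule ded_mp[OF ded_hyp ded_hyp])
lemma mp2: "FS (Imp a (Imp b c)) \<Longrightarrow> a \<in> M \<Longrightarrow> b \<in> M \<Longrightarrow> c \<in> M"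
  by (rule mpM[OF mp1])

lemma notin: "\<chi> \<notin> M \<Longrightarrow> ded M (Imp \<chi> \<phi>)"
proof -
  assume "\<chi> \<notin> M"
  then have "insert \<chi> M \<noteq> M" by blast
  then have "ded (insert \<chi> M) \<phi>" using mx[of "insert \<chi> M"] by blast
  then show ?thesis by (rule deduction)
qed

lemma neg: "Neg \<chi> \<in> M \<longleftrightarrow> \<chi> \<notin> M"
proof
  assume a: "Neg \<chi> \<in> M"
  show "\<chi> \<notin> M"
  proof
    assume "\<chi> \<in> M"
    then have "ded M \<phi>" using ded_mp[OF ded_hyp[OF a] ded_mp[OF ded_hyp ded_FS[OF t_contr]]] by blast
    then show False using nd by simp
  qed
next
  assume a: "\<chi> \<notin> M"
  show "Neg \<chi> \<in> M"
  proof (rule ccontr)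
    assume "Neg \<chi> \<notin> M"
    then have A: "ded M (Imp (Neg \<chi>) \<phi>)" by (rule notin)
    have B: "ded M (Imp \<chi> \<phi>)" using a by (rule notin)
    have "ded M \<phi>" by (rule ded_mp[OF A ded_mp[OF B ded_FS[OF t_cases]]])
    then show False using nd by simp
  qed
qed

lemma disj: "Disj a b \<in> M \<longleftrightarrow> a \<in> M \<or> b \<in> M"
proof
  assume d: "Disj a b \<in> M"
  show "a \<in> M \<or> b \<in> M"
  proof (cases "a \<in> M")
    case False
    then have "Neg a \<in> M" using neg[of a] by simp
    then show ?thesis using mp2[OF t_disj1[of a b] d] by simp
  qed simp
next
  assume h: "a \<in> M \<or> b \<in> M"
  then show "Disj a b \<in> M"
  proof
    assume "a \<in> M" then show ?thesis by (rule mp1[OF t_disj2])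
  next
    assume "b \<in> M" then show ?thesis by (rule mp1[OF t_disj3])
  qed
qed

lemma conj: "Conj a b \<in> M \<longleftrightarrow> a \<in> M \<and> b \<in> M"
proof
  assume c: "Conj a b \<in> M"
  show "a \<in> M \<and> b \<in> M" using mp1[OF t_conj1 c] mp1[OF t_conj2 c] by simp
next
  assume "a \<in> M \<and> b \<in> M"
  then show "Conj a b \<in> M" using mp2[OF t_conj3[of a b]] by simp
qed

lemma imp: "Imp a b \<in> M \<longleftrightarrow> (a \<in> M \<longrightarrow> b \<in> M)"
proof
  assume "Imp a b \<in> M"
  then show "a \<in> M \<longrightarrow> b \<in> M" using mpM[of a b] by simp
next
  assume h: "a \<in> M \<longrightarrow> b \<in> M"
  show "Imp a b \<in> M"
  proof (cases "a \<in> M")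
    case True
    then have "b \<in> M" using h by simp
    then show ?thesis by (rule mp1[OF t_K])
  next
    case False
    then have "Neg a \<in> M" using neg[of a] by simp
    then show ?thesis by (rule mp1[OF t_imp1])
  qed
qed

lemma iff: "Iff a b \<in> M \<longleftrightarrow> (a \<in> M \<longleftrightarrow> b \<in> M)"
proof
  assume i: "Iff a b \<in> M"
  show "a \<in> M \<longleftrightarrow> b \<in> M"
    using mp2[OF t_iff1[of a b] i, of] mp2[OF t_iff2[of a b] i] by blast
next
  assume h: "a \<in> M \<longleftrightarrow> b \<in> M"
  show "Iff a b \<in> M"
  proof (cases "a \<in> M")
    case True
    then have "b \<in> M" using h by simp
    then show ?thesis by (rule mp2[OF t_iff3 True])
  next
    case False
    then have na: "Neg a \<in> M" using neg[of a] by simp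
    have "Neg b \<in> M" using False h neg[of b] by simp
    then show ?thesis by (rule mp2[OF t_iff4 na])
  qed
qed

lemma loop_sw: "Loop b a \<in> M \<Longrightarrow> (a \<in> M \<longrightarrow> b \<in> M) \<Longrightarrow> Loop a b \<in> M"
proof -
  assume l: "Loop b a \<in> M" and h: "a \<in> M \<longrightarrow> b \<in> M"
  have "Disj (Loop a b) (Neg (Imp a b)) \<in> M" using mp1[OF axs l] .
  then have "Loop a b \<in> M \<or> Neg (Imp a b) \<in> M" by (simp only: disj)
  moreover have "Imp a b \<in> M" using h imp[of a b] by simp
  ultimately show ?thesis using neg[of "Imp a b"] by blast
qed

lemma loop: "Loop a b \<in> M \<Longrightarrow> (a \<in> M \<longrightarrow> b \<in> M)"
proof -
  assume "Loop a b \<in> M"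
  then have "Imp a b \<in> M" by (rule mp1[OF ax1])
  then show ?thesis using imp[of a b] by simp
qed

lemma tri: "Tri a b \<in> M \<longleftrightarrow> Loop a b \<in> M \<and> a \<in> M \<and> b \<in> M"
proof -
  have "Iff (Tri a b) (Conj (Loop a b) (Conj a b)) \<in> M" by (rule fs_in[OF ax2])
  then show ?thesis by (simp only: iff conj)
qed

definition "RM = {(a, b). Loop a b \<in> M \<or> Loop b a \<in> M}"

lemma sym_RM: "sym RM" unfolding sym_def RM_def by auto

lemma truth: "sat (\<lambda>n. Var n \<in> M) RM \<chi> \<longleftrightarrow> \<chi> \<in> M"
proof (induction \<chi>)
  case (Loop a b)
  have "sat (\<lambda>n. Var n \<in> M) RM (Loop a b) \<longleftrightarrow> (a \<in> M \<longrightarrow> b \<in> M) \<and> (Loop a b \<in> M \<or> Loop b a \<in> M)"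
    using Loop.IH by (simp add: RM_def)
  then show ?case using loop[of a b] loop_sw[of b a] by blast
next
  case (Tri a b)
  then show ?case using tri[of a b] loop_sw[of b a] by (auto simp: RM_def)
qed (auto simp: neg disj conj imp iff)

end

theorem completeness: "conseq Rsym \<Sigma> \<phi> \<Longrightarrow> ded \<Sigma> \<phi>"
proof (rule ccontr)
  assume c: "conseq Rsym \<Sigma> \<phi>" and n: "\<not> ded \<Sigma> \<phi>"
  obtain M where M: "\<Sigma> \<subseteq> M" "\<not> ded M \<phi>" "\<forall>N. M \<subseteq> N \<longrightarrow> \<not> ded N \<phi> \<longrightarrow> N = M"
    using lindenbaum[OF n] by blast
  interpret maxset M \<phi> using M by unfold_locales auto
  have "RM \<in> Rsym" using sym_RM by (simp add: Rsym_def)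
  moreover have "\<forall>\<sigma>\<in>\<Sigma>. sat (\<lambda>n. Var n \<in> M) RM \<sigma>" using M(1) truth by blast
  ultimately have "sat (\<lambda>n. Var n \<in> M) RM \<phi>" using c unfolding conseq_def by blast
  then have "\<phi> \<in> M" using truth by blast
  then show False using M(2) ded_hyp by blast
qed

theorem mainTheorem16:
  shows "(\<forall>\<Sigma> \<phi>. derivable_FS \<Sigma> \<phi> \<longleftrightarrow> conseq Rsym \<Sigma> \<phi>)
         \<and> (\<forall>\<phi>. FS \<phi> \<longrightarrow> (\<forall>R\<in>Rsym. \<forall>v. sat v R \<phi>))"
proof (intro conjI allI impI ballI iffI)
  fix \<Sigma> \<phi> assume "derivable_FS \<Sigma> \<phi>"
  then show "conseq Rsym \<Sigma> \<phi>" unfolding derivable_iff_ded conseq_def Rsym_def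
    using ded_sound by blast
next
  fix \<Sigma> \<phi> assume "conseq Rsym \<Sigma> \<phi>"
  then show "derivable_FS \<Sigma> \<phi>" by (simp add: derivable_iff_ded completeness)
next
  fix \<phi> R v assume "FS \<phi>" "R \<in> Rsym"
  then show "sat v R \<phi>" using FS_sound by (auto simp: Rsym_def)
qed

end
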